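(* Let $\Gamma$ be a pre-automatic structure with generating alphabet $A$, and suppose that $\sigma : A^* \to S$ and $\tau : A^* \to T$ are interpretations of $\Gamma$ with respect to semigroups $S$ and $T$ respectively. Then $S$ and $T$ are isomorphic.
   Context: Let $A$ be a finite alphabet, $\$ \notin A$ a new symbol, $A^\$ = A\cup\{\$\}$. Define $\delta : A^*\times A^* \to (A^\$\times A^\$)^*$ by padding the shorter word on the right with $\$$ and reading the two words letter by letter as a word of pairs: for $a_i,b_j\in A$, $\delta(a_1\cdots a_m,b_1\cdots b_n)=(a_1,b_1)\cdots(a_m,b_m)(\$,b_{m+1})\cdots(\$,b_n)$ if $m<n$, $(a_1,b_1)\cdots(a_m,b_m)$ if $m=n$, and $(a_1,b_1)\cdots(a_n,b_n)(a_{n+1},\$)\cdots(a_m,\$)$ if $m>n$. A synchronous automaton over $A$ is a finite automaton over the alphabet $A^\$\times A^\$$; it recognises a relation $R\subseteq A^*\times A^*$ if the language it accepts is exactly $\delta(R)$. A pre-automatic structure $\Gamma$ consists of: a finite alphabet $A$ of generators; a finite automaton recognising a language $L\subseteq A^*$ (the language of representatives); a synchronous automaton recognising a relation $L_=\subseteq L\times L$; and for each $a\in A$ a synchronous automaton recognising a relation $L_a\subseteq L\times L$. An interpretation of $\Gamma$ with respect to a semigroup $S$ is a morphism $\sigma : A^*\to S$ such that (i) $\sigma(L)=S$; (ii) for $u,v\in L$, $(u,v)\in L_=$ iff $\sigma(u)=\sigma(v)$; (iii) for each $a\in A$ and $u,v\in L$, $(u,v)\in L_a$ iff $\sigma(ua)=\sigma(v)$.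 *)

theory Defs
  imports Main
begin

record 's fa =
  fa_states :: "nat set"
  fa_alpha  :: "'s set"
  fa_init   :: "nat set"
  fa_trans  :: "(nat \<times> 's \<times> nat) set"
  fa_final  :: "nat set"

definition finite_automaton :: "'s fa \<Rightarrow> 's set \<Rightarrow> bool" where
  "finite_automaton M \<Sigma> \<longleftrightarrow>
     fa_alpha M = \<Sigma> \<and> finite \<Sigma> \<and> finite (fa_states M) \<and>
     fa_init M \<subseteq> fa_states M \<and> fa_final M \<subseteq> fa_states M \<and>
     fa_trans M \<subseteq> fa_states M \<times> \<Sigma> \<times> fa_states M"

fun fa_run :: "'s fa \<Rightarrow> nat \<Rightarrow> 's list \<Rightarrow> nat \<Rightarrow> bool" where
  "fa_run M p [] q \<longleftrightarrow> p = q"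
| "fa_run M p (x # w) q \<longleftrightarrow> (\<exists>r. (p, x, r) \<in> fa_trans M \<and> fa_run M r w q)"

definition fa_language :: "'s fa \<Rightarrow> 's list set" where
  "fa_language M = {w. w \<in> lists (fa_alpha M) \<and>
     (\<exists>p \<in> fa_init M. \<exists>q \<in> fa_final M. fa_run M p w q)}"

text \<open>The padding symbol \$ is represented by None; a letter a of A by Some a.\<close>

definition dollar_alph :: "'a set \<Rightarrow> 'a option set" where
  "dollar_alph A = insert None (Some ` A)"

definition pad :: "'a list \<Rightarrow> nat \<Rightarrow> 'a option list" where
  "pad u n = map Some u @ replicate (n - length u) None"

definition delta :: "'a list \<Rightarrow> 'a list \<Rightarrow> ('a option \<times> 'a option) list" where
  "delta u v = zip (pad u (length v)) (pad v (length u))"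

definition synchronous_automaton :: "('a option \<times> 'a option) fa \<Rightarrow> 'a set \<Rightarrow> bool" where
  "synchronous_automaton M A \<longleftrightarrow> finite_automaton M (dollar_alph A \<times> dollar_alph A)"

definition recognises_rel ::
  "('a option \<times> 'a option) fa \<Rightarrow> ('a list \<times> 'a list) set \<Rightarrow> bool" where
  "recognises_rel M R \<longleftrightarrow> fa_language M = (\<lambda>(u, v). delta u v) ` R"

definition pre_automatic_structure ::
  "'a set \<Rightarrow> 'a fa \<Rightarrow> 'a list set
   \<Rightarrow> ('a option \<times> 'a option) fa \<Rightarrow> ('a list \<times> 'a list) set
   \<Rightarrow> ('a \<Rightarrow> ('a option \<times> 'a option) fa) \<Rightarrow> ('a \<Rightarrow> ('a list \<times> 'a list) set) \<Rightarrow> bool" where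
  "pre_automatic_structure A M_L L Meq Leq Ma La \<longleftrightarrow>
     finite A \<and>
     finite_automaton M_L A \<and> fa_language M_L = L \<and>
     synchronous_automaton Meq A \<and> Leq \<subseteq> L \<times> L \<and> recognises_rel Meq Leq \<and>
     (\<forall>a \<in> A. synchronous_automaton (Ma a) A \<and> La a \<subseteq> L \<times> L \<and> recognises_rel (Ma a) (La a))"

definition word_morphism :: "'a set \<Rightarrow> ('a list \<Rightarrow> 's::semigroup_mult) \<Rightarrow> bool" where
  "word_morphism A \<sigma> \<longleftrightarrow> (\<forall>u \<in> lists A. \<forall>v \<in> lists A. \<sigma> (u @ v) = \<sigma> u * \<sigma> v)"

text \<open>Interpretation of the structure with respect to the semigroup given by the
  (whole) type 's; condition (i) says sigma(L) is all of S.\<close>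

definition interpretation_of ::
  "'a set \<Rightarrow> 'a list set \<Rightarrow> ('a list \<times> 'a list) set \<Rightarrow> ('a \<Rightarrow> ('a list \<times> 'a list) set)
   \<Rightarrow> ('a list \<Rightarrow> 's::semigroup_mult) \<Rightarrow> bool" where
  "interpretation_of A L Leq La \<sigma> \<longleftrightarrow>
     word_morphism A \<sigma> \<and>
     \<sigma> ` L = UNIV \<and>
     (\<forall>u \<in> L. \<forall>v \<in> L. (u, v) \<in> Leq \<longleftrightarrow> \<sigma> u = \<sigma> v) \<and>
     (\<forall>a \<in> A. \<forall>u \<in> L. \<forall>v \<in> L. (u, v) \<in> La a \<longleftrightarrow> \<sigma> (u @ [a]) = \<sigma> v)"

definition semigroup_iso :: "('s::semigroup_mult \<Rightarrow> 't::semigroup_mult) \<Rightarrow> bool" where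
  "semigroup_iso f \<longleftrightarrow> bij f \<and> (\<forall>x y. f (x * y) = f x * f y)"

end

theory Submission
  imports Defs
begin

lemma wm: "word_morphism A \<sigma> \<Longrightarrow> u \<in> lists A \<Longrightarrow> v \<in> lists A \<Longrightarrow> \<sigma> (u @ v) = \<sigma> u * \<sigma> v"
  unfolding word_morphism_def by blast

lemma int_wm: "interpretation_of A L Leq La \<sigma> \<Longrightarrow> word_morphism A \<sigma>"
  unfolding interpretation_of_def by blast

lemma int_surj: "interpretation_of A L Leq La \<sigma> \<Longrightarrow> \<exists>u. u \<in> L \<and> \<sigma> u = y"
  unfolding interpretation_of_def by (metis UNIV_I imageE)

lemma int_eq: "interpretation_of A L Leq La \<sigma> \<Longrightarrow> u \<in> L \<Longrightarrow> v \<in> L \<Longrightarrow> (u, v) \<in> Leq \<longleftrightarrow> \<sigma> u = \<sigma> v"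
  unfolding interpretation_of_def by blast

lemma int_a: "interpretation_of A L Leq La \<sigma> \<Longrightarrow> a \<in> A \<Longrightarrow> u \<in> L \<Longrightarrow> v \<in> L \<Longrightarrow> (u, v) \<in> La a \<longleftrightarrow> \<sigma> (u @ [a]) = \<sigma> v"
  unfolding interpretation_of_def by blast

lemma pas_L: "pre_automatic_structure A M_L L Meq Leq Ma La \<Longrightarrow> L \<subseteq> lists A"
proof -
  assume h: "pre_automatic_structure A M_L L Meq Leq Ma La"
  have fa: "finite_automaton M_L A" using h unfolding pre_automatic_structure_def by simp
  have fl: "fa_language M_L = L" using h unfolding pre_automatic_structure_def by simp
  have al: "fa_alpha M_L = A" using fa unfolding finite_automaton_def by simp
  show ?thesis unfolding fl[symmetric] fa_language_def al by (rule subsetI, simp)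
qed

lemma key:
  assumes L: "L \<subseteq> lists A"
    and s: "interpretation_of A L Leq La \<sigma>"
    and t: "interpretation_of A L Leq La \<tau>"
    and x: "x \<in> lists A" and u: "u \<in> L"
  shows "\<forall>w\<in>L. \<sigma> (u @ x) = \<sigma> w \<longleftrightarrow> \<tau> (u @ x) = \<tau> w"
  using x
proof (induction x rule: rev_induct)
  case Nil
  show ?case
  proof
    fix w assume w: "w \<in> L"
    show "\<sigma> (u @ []) = \<sigma> w \<longleftrightarrow> \<tau> (u @ []) = \<tau> w"
      using int_eq[OF s u w] int_eq[OF t u w] by simp
  qed
next
  case (snoc a x)
  have xA: "x \<in> lists A" and aA: "a \<in> A" using snoc.prems by auto
  have a1: "[a] \<in> lists A" using aA by simp
  have uA: "u \<in> lists A" using u L by blast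
  have uxA: "u @ x \<in> lists A" using uA xA by simp
  have ms: "word_morphism A \<sigma>" and mt: "word_morphism A \<tau>"
    using int_wm[OF s] int_wm[OF t] .
  obtain u' where u': "u' \<in> L" "\<sigma> u' = \<sigma> (u @ x)"
    using int_surj[OF s] by blast
  have u'A: "u' \<in> lists A" using u' L by blast
  have tu': "\<tau> (u @ x) = \<tau> u'" using bspec[OF snoc.IH[OF xA] u'(1)] u'(2) by simp
  have e1: "\<sigma> ((u @ x) @ [a]) = \<sigma> (u' @ [a])"
    using wm[OF ms uxA a1] wm[OF ms u'A a1] u'(2) by simp
  have e2: "\<tau> ((u @ x) @ [a]) = \<tau> (u' @ [a])"
    using wm[OF mt uxA a1] wm[OF mt u'A a1] tu' by simp
  show ?case
  proof
    fix w assume w: "w \<in> L"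
    have "\<sigma> ((u @ x) @ [a]) = \<sigma> w \<longleftrightarrow> \<tau> ((u @ x) @ [a]) = \<tau> w"
      unfolding e1 e2 using int_a[OF s aA u'(1) w] int_a[OF t aA u'(1) w] by simp
    then show "\<sigma> (u @ x @ [a]) = \<sigma> w \<longleftrightarrow> \<tau> (u @ x @ [a]) = \<tau> w"
      by simp
  qed
qed

theorem proposition2p3:
  fixes A :: "'a set"
    and M_L :: "'a fa" and L :: "'a list set"
    and Meq :: "('a option \<times> 'a option) fa" and Leq :: "('a list \<times> 'a list) set"
    and Ma :: "'a \<Rightarrow> ('a option \<times> 'a option) fa" and La :: "'a \<Rightarrow> ('a list \<times> 'a list) set"
    and \<sigma> :: "'a list \<Rightarrow> 's::semigroup_mult"
    and \<tau> :: "'a list \<Rightarrow> 't::semigroup_mult"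
  assumes "pre_automatic_structure A M_L L Meq Leq Ma La"
    and "interpretation_of A L Leq La \<sigma>"
    and "interpretation_of A L Leq La \<tau>"
  shows "\<exists>f :: 's \<Rightarrow> 't. semigroup_iso f"
proof -
  note s = assms(2) and t = assms(3)
  have L: "L \<subseteq> lists A" using pas_L[OF assms(1)] .
  define r where "r y = (SOME u. u \<in> L \<and> \<sigma> u = y)" for y
  have r: "r y \<in> L \<and> \<sigma> (r y) = y" for y
    unfolding r_def by (rule someI_ex, rule int_surj[OF s])
  have eqv: "\<sigma> u = \<sigma> v \<longleftrightarrow> \<tau> u = \<tau> v" if "u \<in> L" "v \<in> L" for u v
    using int_eq[OF s that] int_eq[OF t that] by simp
  have ms: "word_morphism A \<sigma>" and mt: "word_morphism A \<tau>"
    using int_wm[OF s] int_wm[OF t] .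
  define f where "f y = \<tau> (r y)" for y
  have "semigroup_iso f"
    unfolding semigroup_iso_def
  proof (intro conjI allI bijI)
    show "inj f"
    proof (rule injI)
      fix x y assume "f x = f y"
      then have "\<tau> (r x) = \<tau> (r y)" by (simp add: f_def)
      then have "\<sigma> (r x) = \<sigma> (r y)" using eqv[of "r x" "r y"] r[of x] r[of y] by simp
      then show "x = y" using r[of x] r[of y] by simp
    qed
    show "surj f"
      unfolding surj_def
    proof
      fix z
      obtain u where u: "u \<in> L" "\<tau> u = z" using int_surj[OF t] by blast
      have "f (\<sigma> u) = z" unfolding f_def using eqv[of "r (\<sigma> u)" u] r[of "\<sigma> u"] u by simp
      then show "\<exists>x. z = f x" by metis
    qed
    fix x y
    have uA: "r x \<in> lists A" and vA: "r y \<in> lists A" using r[of x] r[of y] L by blast+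
    have "\<sigma> (r x @ r y) = x * y" using wm[OF ms uA vA] r[of x] r[of y] by simp
    then have "\<sigma> (r x @ r y) = \<sigma> (r (x * y))" using r[of "x * y"] by simp
    then have "\<tau> (r x @ r y) = \<tau> (r (x * y))" using bspec[OF key[OF L s t vA, of "r x"] , of "r (x * y)"] r[of x] r[of "x * y"] by simp
    then show "f (x * y) = f x * f y"
      unfolding f_def using wm[OF mt uA vA] by simp
  qed
  then show ?thesis by blast
qed

end
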